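(* Assume that for every packing $\mathcal{F}$ of unit balls in $\mathbb{E}^3$ containing $\mathbf{B}$, with $\mathbf{P}$ the Voronoi cell of $\mathcal{F}$ assigned to $\mathbf{B}$, one has $\frac{\mathrm{vol}_3(\mathbf{B})}{\mathrm{vol}_3(\mathbf{P}\cap\sqrt2\,\mathbf{B})}<0.7547$. Then for every packing $\{\mathbf{c}_1+\mathbf{B},\dots,\mathbf{c}_n+\mathbf{B}\}$ of $n\ge1$ unit balls in $\mathbb{E}^3$ and $\hat r:=1.58731$, $$\frac{n\,\mathrm{vol}_3(\mathbf{B})}{\mathrm{vol}_3\left(\bigcup_{i=1}^n(\mathbf{c}_i+\hat r\mathbf{B})\right)}<0.7547.$$
   Context: $\mathbf{B}$ is the closed unit ball centered at the origin of $\mathbb{E}^3$; a packing means pairwise disjoint interiors. The Voronoi cell assigned to a ball of the packing is the set of points at least as close to its center as to any other center of the packing. *)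

theory Defs
  imports "HOL-Analysis.Analysis"
begin

text \<open>A packing of unit balls in E^3, given by its set of centers: the closed unit
balls c + B (c in C) have pairwise disjoint interiors, i.e. distinct centers are
at distance at least 2.\<close>
definition unit_ball_packing :: "(real^3) set \<Rightarrow> bool" where
  "unit_ball_packing C \<longleftrightarrow> (\<forall>c\<in>C. \<forall>d\<in>C. c \<noteq> d \<longrightarrow>
      interior (cball c 1) \<inter> interior (cball d 1) = {})"

definition voronoi_cell :: "(real^3) set \<Rightarrow> real^3 \<Rightarrow> (real^3) set" where
  "voronoi_cell C c = {x. \<forall>d\<in>C. dist x c \<le> dist x d}"

definition vol3 :: "(real^3) set \<Rightarrow> real" where
  "vol3 S = measure lebesgue S"

end

theory Submission
  imports Defs
begin

lemma packing_iff:
  "unit_ball_packing C \<longleftrightarrow> (\<forall>c\<in>C. \<forall>d\<in>C. c \<noteq> d \<longrightarrow> 2 \<le> dist c d)"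
proof -
  have "ball c 1 \<inter> ball d 1 = {} \<longleftrightarrow> 2 \<le> dist c d" for c d :: "real^3"
  proof
    assume h: "ball c 1 \<inter> ball d 1 = {}"
    show "2 \<le> dist c d"
    proof (rule ccontr)
      assume "\<not> 2 \<le> dist c d"
      hence "midpoint c d \<in> ball c 1 \<inter> ball d 1"
        by (simp add: dist_midpoint)
      with h show False by blast
    qed
  next
    assume "2 \<le> dist c d" thus "ball c 1 \<inter> ball d 1 = {}"
      by (intro disjoint_ballI) simp
  qed
  thus ?thesis unfolding unit_ball_packing_def by simp
qed

lemma vor_closed: "closed (voronoi_cell C c)"
proof -
  have "voronoi_cell C c = (\<Inter>d\<in>C. {x. dist x c \<le> dist x d})"
    unfolding voronoi_cell_def by auto
  moreover have "closed {x. dist x c \<le> dist x d}" for d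
    by (intro closed_Collect_le continuous_intros)
  ultimately show ?thesis by auto
qed

lemma vol_ball_pos: "0 < vol3 (cball (c::real^3) 1)"
proof -
  have "measure lebesgue (cball c (1::real)) = measure lborel (cball c 1)"
    by (simp add: measure_completion)
  thus ?thesis unfolding vol3_def by simp
qed

theorem mainTheorem13:
  assumes hyp: "\<And>F :: (real^3) set. unit_ball_packing F \<Longrightarrow> 0 \<in> F \<Longrightarrow>
      vol3 (cball 0 1) / vol3 (voronoi_cell F 0 \<inter> cball 0 (sqrt 2)) < 0.7547"
    and "finite C" and "C \<noteq> {}" and "unit_ball_packing C"
  shows "real (card C) * vol3 (cball (0::real^3) 1) /
           vol3 (\<Union>c\<in>C. cball c 1.58731) < 0.7547"
proof -
  define W where "W c = voronoi_cell C c \<inter> cball c (sqrt 2)" for c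
  define v where "v = vol3 (cball (0::real^3) 1)"
  have vpos: "0 < v" unfolding v_def by (rule vol_ball_pos)
  have pk: "\<forall>c\<in>C. \<forall>d\<in>C. c \<noteq> d \<longrightarrow> 2 \<le> dist c d"
    using assms(4) packing_iff by blast
  have Wm: "W c \<in> lmeasurable" for c
    unfolding W_def by (intro lmeasurable_compact closed_Int_compact vor_closed) auto
  have Wbig: "v < 0.7547 * vol3 (W c)" if c: "c \<in> C" for c
  proof -
    define F where "F = (\<lambda>d. d - c) ` C"
    have F0: "0 \<in> F" using c unfolding F_def by force
    have dd: "dist (x - c) (d - c) = dist x d" for x d :: "real^3"
      by (simp add: dist_norm)
    have Fp: "unit_ball_packing F" unfolding packing_iff F_def
      using pk by (simp add: dd)
    have iff: "x \<in> W c \<longleftrightarrow> x - c \<in> voronoi_cell F 0 \<inter> cball 0 (sqrt 2)" for x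
    proof -
      have "dist (x - c) 0 = dist x c" by (simp add: dist_norm)
      thus ?thesis unfolding W_def voronoi_cell_def F_def
        by (simp add: dd dist_commute)
    qed
    have eq: "W c = (+) c ` (voronoi_cell F 0 \<inter> cball 0 (sqrt 2))"
    proof
      show "W c \<subseteq> (+) c ` (voronoi_cell F 0 \<inter> cball 0 (sqrt 2))"
      proof
        fix x assume "x \<in> W c"
        hence "x - c \<in> voronoi_cell F 0 \<inter> cball 0 (sqrt 2)" using iff by blast
        moreover have "x = c + (x - c)" by simp
        ultimately show "x \<in> (+) c ` (voronoi_cell F 0 \<inter> cball 0 (sqrt 2))" by blast
      qed
    next
      show "(+) c ` (voronoi_cell F 0 \<inter> cball 0 (sqrt 2)) \<subseteq> W c"
      proof
        fix x assume "x \<in> (+) c ` (voronoi_cell F 0 \<inter> cball 0 (sqrt 2))"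
        then obtain y where y: "y \<in> voronoi_cell F 0 \<inter> cball 0 (sqrt 2)" "x = c + y" by blast
        have "x - c = y" using y(2) by simp
        thus "x \<in> W c" using iff y(1) by simp
      qed
    qed
    have "vol3 (W c) = vol3 (voronoi_cell F 0 \<inter> cball 0 (sqrt 2))"
      unfolding vol3_def eq by (rule measure_translation)
    moreover have "v / vol3 (voronoi_cell F 0 \<inter> cball 0 (sqrt 2)) < 0.7547"
      unfolding v_def by (rule hyp[OF Fp F0])
    moreover have "cball c 1 \<subseteq> W c"
    proof
      fix x assume x: "x \<in> cball c 1"
      have "dist x c \<le> dist x d" if "d \<in> C" for d
      proof (cases "d = c")
        case False
        hence "c \<noteq> d" by simp
        hence "2 \<le> dist c d" using bspec[OF bspec[OF pk c] that] by blast
        moreover have "dist c d \<le> dist c x + dist x d" by (rule dist_triangle)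
        ultimately show ?thesis using x by (simp add: dist_commute)
      qed simp
      moreover have "dist c x \<le> sqrt 2"
      proof -
        have h: "1 \<le> sqrt (2::real)" using real_sqrt_le_mono[of 1 2] by simp
        have "dist c x \<le> 1" using x by simp
        thus ?thesis using h by linarith
      qed
      ultimately show "x \<in> W c" unfolding W_def voronoi_cell_def by simp
    qed
    hence "vol3 (cball c 1) \<le> vol3 (W c)"
      unfolding vol3_def by (intro measure_mono_fmeasurable Wm) auto
    moreover have "vol3 (cball c 1) = v"
    proof -
      have "cball c (1::real) = (+) c ` cball 0 1" by (simp add: cball_translation)
      thus ?thesis unfolding v_def vol3_def by (metis measure_translation)
    qed
    ultimately show ?thesis using vpos
      by (smt (verit, ccfv_SIG) divide_less_eq)
  qed
  have neg: "pairwise (\<lambda>c d. negligible (W c \<inter> W d)) C"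
    unfolding pairwise_def
  proof (intro ballI impI)
    fix c d assume "c \<in> C" "d \<in> C" "c \<noteq> d"
    have "W c \<inter> W d \<subseteq> {x. (2 *\<^sub>R (d - c)) \<bullet> x = d \<bullet> d - c \<bullet> c}"
    proof
      fix x assume "x \<in> W c \<inter> W d"
      hence "dist x c = dist x d" using \<open>c \<in> C\<close> \<open>d \<in> C\<close>
        unfolding W_def voronoi_cell_def by (auto intro: antisym)
      hence "norm (x - c)^2 = norm (x - d)^2" by (simp add: dist_norm)
      thus "x \<in> {x. (2 *\<^sub>R (d - c)) \<bullet> x = d \<bullet> d - c \<bullet> c}"
        by (simp add: power2_norm_eq_inner inner_diff_left inner_diff_right inner_commute algebra_simps)
    qed
    moreover have "negligible {x. (2 *\<^sub>R (d - c)) \<bullet> x = d \<bullet> d - c \<bullet> c}"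
      using \<open>c \<noteq> d\<close> by (intro negligible_hyperplane) simp
    ultimately show "negligible (W c \<inter> W d)" using negligible_subset by blast
  qed
  have sumeq: "vol3 (\<Union>(W ` C)) = (\<Sum>c\<in>C. vol3 (W c))"
    unfolding vol3_def using measure_negligible_finite_Union_image[OF assms(2) _ neg] Wm
    by (simp add: o_def)
  have "(\<Sum>c\<in>C. v) < (\<Sum>c\<in>C. 0.7547 * vol3 (W c))"
    using Wbig assms(2,3) by (intro sum_strict_mono) auto
  hence lt: "real (card C) * v < 0.7547 * vol3 (\<Union>(W ` C))"
    by (simp add: sumeq sum_distrib_left)
  have sub: "\<Union>(W ` C) \<subseteq> (\<Union>c\<in>C. cball c 1.58731)"
  proof -
    have "sqrt 2 \<le> (1.58731::real)"
      by (rule real_le_lsqrt) (simp_all add: power2_eq_square)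
    thus ?thesis unfolding W_def by auto
  qed
  have um: "(\<Union>c\<in>C. cball c (1.58731::real)) \<in> lmeasurable"
    using assms(2) by (intro fmeasurable.finite_UN) auto
  have "vol3 (\<Union>(W ` C)) \<le> vol3 (\<Union>c\<in>C. cball c 1.58731)"
  proof -
    have Um: "\<Union>(W ` C) \<in> lmeasurable" using assms(2) Wm by (intro fmeasurable.finite_UN) auto
    show ?thesis unfolding vol3_def using sub um Um by (meson fmeasurableD measure_mono_fmeasurable)
  qed
  hence "0.7547 * vol3 (\<Union>(W ` C)) \<le> 0.7547 * vol3 (\<Union>c\<in>C. cball c 1.58731)"
    by (rule mult_left_mono) simp
  hence lt2: "real (card C) * v < 0.7547 * vol3 (\<Union>c\<in>C. cball c 1.58731)"
    by (rule less_le_trans[OF lt])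
  have n0: "0 \<le> real (card C) * v" using vpos by simp
  have "0 < 0.7547 * vol3 (\<Union>c\<in>C. cball c 1.58731)"
    by (rule le_less_trans[OF n0 lt2])
  hence apos: "0 < vol3 (\<Union>c\<in>C. cball c 1.58731)"
    by (simp add: zero_less_mult_iff)
  show ?thesis unfolding v_def[symmetric] pos_divide_less_eq[OF apos]
    using lt2 by (metis mult.commute)
qed

end
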